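(* Let $n\ge2$. (1) For $w\in\mathfrak S_{2n+1}$, if the arcs $\alpha_1(w)=(w_{2n},w_{2n+1})$ and $\alpha_2(w)=(w_{2n-2},w_{2n-1})$ cross, then $w\in\mathfrak B_{2n+1}$ if and only if $\mathrm{std}(w_1\cdots w_{2n-1})\in\mathfrak B_{2n-1}$. (2) For $w\in\mathfrak S_{2n}$, if the arcs $\alpha_1(w)=(w_{2n},2n+1)$ and $\alpha_2(w)=(w_{2n-2},w_{2n-1})$ cross, then $w\in\mathfrak B_{2n}$ if and only if $\mathrm{std}(w_1\cdots w_{2n-1})\in\mathfrak B_{2n-1}$.
   Context: Standardization $\mathrm{std}$ of a word of distinct integers: the permutation of $\{1,\dots,r\}$ with the same relative order. Butler permutations $\mathfrak B_N$ ($N\ge2$): for $w\in\mathfrak S_N$ define directed arcs: if $N$ even, $\alpha_1=(w_N,N+1)$, $\alpha_r=(w_{N-2r+2},w_{N-2r+3})$ ($2\le r\le N/2$), $\alpha_{N/2+1}=(0,w_1)$; if $N$ odd, $\alpha_r=(w_{N-2r+1},w_{N-2r+2})$ ($1\le r\le(N-1)/2$), $\alpha_{(N+1)/2}=(0,w_1)$. Arc $(a,b)$ is forward if $a<b$, else reverse; $(a,b)$ is nested by $(c,d)$ if $\min(c,d)<a,b<\max(c,d)$; two arcs cross if exactly one endpoint of one lies strictly between the endpoints of the other. Let $k$ be least with $\alpha_k,\alpha_{k+1}$ non-crossing; if it exists, $w$ is Butler iff ($\alpha_{k+1}$ nested by $\alpha_k$ and $\alpha_k$ reverse) or ($\alpha_{k+1}$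 not nested by $\alpha_k$ and $\alpha_k$ forward); otherwise put $k=N/2$ ($N$ even) or $(N-1)/2$ ($N$ odd) and $w$ is Butler iff $\alpha_k$ is reverse. *)

theory Defs
  imports Main
begin

definition is_perm :: "nat \<Rightarrow> nat list \<Rightarrow> bool" where
  "is_perm N w \<longleftrightarrow> length w = N \<and> distinct w \<and> set w = {1..N}"

text \<open>1-indexed entry, with the convention w_0 = 0.\<close>
definition ent :: "nat list \<Rightarrow> nat \<Rightarrow> nat" where
  "ent w i = (if i = 0 then 0 else w ! (i - 1))"

definition std :: "nat list \<Rightarrow> nat list" where
  "std xs = map (\<lambda>x. card {y \<in> set xs. y \<le> x}) xs"

definition num_arcs :: "nat \<Rightarrow> nat" where
  "num_arcs N = (if even N then N div 2 + 1 else (N + 1) div 2)"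

definition arc :: "nat \<Rightarrow> nat list \<Rightarrow> nat \<Rightarrow> nat \<times> nat" where
  "arc N w r =
     (if even N then
        (if r = 1 then (ent w N, N + 1)
         else if r = N div 2 + 1 then (0, ent w 1)
         else (ent w (N - 2*r + 2), ent w (N - 2*r + 3)))
      else
        (if r = (N + 1) div 2 then (0, ent w 1)
         else (ent w (N - 2*r + 1), ent w (N - 2*r + 2))))"

definition forward :: "nat \<times> nat \<Rightarrow> bool" where
  "forward \<alpha> \<longleftrightarrow> fst \<alpha> < snd \<alpha>"

definition reverse :: "nat \<times> nat \<Rightarrow> bool" where
  "reverse \<alpha> \<longleftrightarrow> \<not> forward \<alpha>"

definition strictly_between :: "nat \<Rightarrow> nat \<times> nat \<Rightarrow> bool" where
  "strictly_between x \<beta> \<longleftrightarrow> min (fst \<beta>) (snd \<beta>) < x \<and> x < max (fst \<beta>) (snd \<beta>)"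

definition nested_by :: "nat \<times> nat \<Rightarrow> nat \<times> nat \<Rightarrow> bool" where
  "nested_by \<alpha> \<beta> \<longleftrightarrow> strictly_between (fst \<alpha>) \<beta> \<and> strictly_between (snd \<alpha>) \<beta>"

definition crosses :: "nat \<times> nat \<Rightarrow> nat \<times> nat \<Rightarrow> bool" where
  "crosses \<alpha> \<beta> \<longleftrightarrow> (strictly_between (fst \<alpha>) \<beta> \<noteq> strictly_between (snd \<alpha>) \<beta>)"

definition butler :: "nat \<Rightarrow> nat list \<Rightarrow> bool" where
  "butler N w \<longleftrightarrow> is_perm N w \<and>
     (if \<exists>k. 1 \<le> k \<and> k + 1 \<le> num_arcs N \<and> \<not> crosses (arc N w k) (arc N w (k+1)) then
        (let k = (LEAST k. 1 \<le> k \<and> k + 1 \<le> num_arcs N \<and> \<not> crosses (arc N w k) (arc N w (k+1)))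
         in (nested_by (arc N w (k+1)) (arc N w k) \<and> reverse (arc N w k)) \<or>
            (\<not> nested_by (arc N w (k+1)) (arc N w k) \<and> forward (arc N w k)))
      else reverse (arc N w (if even N then N div 2 else (N - 1) div 2)))"

end

theory Submission
  imports Defs
begin

definition bcore :: "nat \<Rightarrow> (nat \<Rightarrow> nat \<times> nat) \<Rightarrow> nat \<Rightarrow> bool" where
  "bcore m A i =
     (if \<exists>k. 1 \<le> k \<and> k + 1 \<le> m \<and> \<not> crosses (A k) (A (k+1)) then
        (let k = (LEAST k. 1 \<le> k \<and> k + 1 \<le> m \<and> \<not> crosses (A k) (A (k+1)))
         in (nested_by (A (k+1)) (A k) \<and> reverse (A k)) \<or>
            (\<not> nested_by (A (k+1)) (A k) \<and> forward (A k)))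
      else reverse (A i))"

lemma butler_bcore:
  "butler N w = (is_perm N w \<and> bcore (num_arcs N) (arc N w) (if even N then N div 2 else (N - 1) div 2))"
  unfolding butler_def bcore_def by simp

lemma bcore_shift:
  assumes C: "\<And>r s. 1\<le>r \<Longrightarrow> r\<le>m \<Longrightarrow> 1\<le>s \<Longrightarrow> s\<le>m \<Longrightarrow> crosses (B r) (B s) = crosses (A (Suc r)) (A (Suc s))"
    and Ne: "\<And>r s. 1\<le>r \<Longrightarrow> r\<le>m \<Longrightarrow> 1\<le>s \<Longrightarrow> s\<le>m \<Longrightarrow> nested_by (B r) (B s) = nested_by (A (Suc r)) (A (Suc s))"
    and F: "\<And>r. 1\<le>r \<Longrightarrow> r\<le>m \<Longrightarrow> forward (B r) = forward (A (Suc r))"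
    and X: "crosses (A 1) (A 2)"
    and i: "1 \<le> i" "i \<le> m"
  shows "bcore (Suc m) A (Suc i) = bcore m B i"
proof -
  define P where "P k = (1 \<le> k \<and> k + 1 \<le> Suc m \<and> \<not> crosses (A k) (A (k+1)))" for k
  define Q where "Q k = (1 \<le> k \<and> k + 1 \<le> m \<and> \<not> crosses (B k) (B (k+1)))" for k
  have PQ: "P (Suc k) = Q k" for k
  proof (cases "k = 0")
    case True thus ?thesis using X unfolding P_def Q_def by (simp add: numeral_2_eq_2)
  next
    case False thus ?thesis unfolding P_def Q_def using C[of k "Suc k"] by auto
  qed
  have P0: "\<not> P 0" unfolding P_def by simp
  have ex: "(\<exists>k. P k) = (\<exists>k. Q k)"
    by (metis PQ P0 not0_implies_Suc)
  show ?thesis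
  proof (cases "\<exists>k. Q k")
    case True
    then obtain k0 where "Q k0" by blast
    hence "P (Suc k0)" using PQ by simp
    hence L: "(LEAST k. P k) = Suc (LEAST k. Q k)"
      using Least_Suc[of P "Suc k0"] P0 PQ by simp
    define k where "k = (LEAST k. Q k)"
    have Qk: "Q k" unfolding k_def using True by (metis LeastI)
    hence k: "1 \<le> k" "k + 1 \<le> m" unfolding Q_def by auto
    have "bcore (Suc m) A (Suc i) = ((nested_by (A (Suc k+1)) (A (Suc k)) \<and> reverse (A (Suc k))) \<or>
            (\<not> nested_by (A (Suc k+1)) (A (Suc k)) \<and> forward (A (Suc k))))"
      unfolding bcore_def using True ex L k_def P_def[abs_def] by (simp add: Let_def)
    also have "\<dots> = ((nested_by (B (k+1)) (B k) \<and> reverse (B k)) \<or>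
            (\<not> nested_by (B (k+1)) (B k) \<and> forward (B k)))"
      using Ne[of "k+1" k] F[of k] k unfolding reverse_def by simp
    also have "\<dots> = bcore m B i"
      unfolding bcore_def using True k_def Q_def[abs_def] by (simp add: Let_def)
    finally show ?thesis .
  next
    case False
    hence "\<not> (\<exists>k. P k)" using ex by simp
    hence "bcore (Suc m) A (Suc i) = reverse (A (Suc i))"
      unfolding bcore_def P_def by auto
    also have "\<dots> = reverse (B i)" using F[OF i] unfolding reverse_def by simp
    also have "\<dots> = bcore m B i" using False unfolding bcore_def Q_def by auto
    finally show ?thesis .
  qed
qed

lemma sb_mono:
  assumes g: "\<And>a b. a \<in> S \<Longrightarrow> b \<in> S \<Longrightarrow> (g a < g b) = (a < b)"
    and "x \<in> S" "fst \<beta> \<in> S" "snd \<beta> \<in> S"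
  shows "strictly_between (g x) (map_prod g g \<beta>) = strictly_between x \<beta>"
proof -
  have le: "a \<in> S \<Longrightarrow> b \<in> S \<Longrightarrow> (g a \<le> g b) = (a \<le> b)" for a b
    using g[of b a] by (simp add: not_less[symmetric])
  show ?thesis using assms le unfolding strictly_between_def
    by (cases \<beta>) (auto simp: min_def max_def)
qed

lemma rels_mono:
  assumes g: "\<And>a b. a \<in> S \<Longrightarrow> b \<in> S \<Longrightarrow> (g a < g b) = (a < b)"
    and "fst \<alpha> \<in> S" "snd \<alpha> \<in> S" "fst \<beta> \<in> S" "snd \<beta> \<in> S"
  shows "crosses (map_prod g g \<alpha>) (map_prod g g \<beta>) = crosses \<alpha> \<beta>"
    "nested_by (map_prod g g \<alpha>) (map_prod g g \<beta>) = nested_by \<alpha> \<beta>"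
    "forward (map_prod g g \<alpha>) = forward \<alpha>"
proof -
  have e1: "strictly_between (g (fst \<alpha>)) (map_prod g g \<beta>) = strictly_between (fst \<alpha>) \<beta>"
    by (rule sb_mono[OF g]) (use assms in auto)
  have e2: "strictly_between (g (snd \<alpha>)) (map_prod g g \<beta>) = strictly_between (snd \<alpha>) \<beta>"
    by (rule sb_mono[OF g]) (use assms in auto)
  show "crosses (map_prod g g \<alpha>) (map_prod g g \<beta>) = crosses \<alpha> \<beta>"
    using e1 e2 unfolding crosses_def by (cases \<alpha>) auto
  show "nested_by (map_prod g g \<alpha>) (map_prod g g \<beta>) = nested_by \<alpha> \<beta>"
    using e1 e2 unfolding nested_by_def by (cases \<alpha>) auto
  show "forward (map_prod g g \<alpha>) = forward \<alpha>"
    using g assms unfolding forward_def by (cases \<alpha>) auto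
qed

definition rk :: "nat list \<Rightarrow> nat \<Rightarrow> nat" where
  "rk xs x = card {y \<in> set xs. y \<le> x}"

lemma std_nth: "i < length xs \<Longrightarrow> std xs ! i = rk xs (xs ! i)"
  unfolding std_def rk_def by simp

lemma rk_less:
  assumes "0 \<notin> set xs" "a \<in> insert 0 (set xs)" "b \<in> insert 0 (set xs)"
  shows "(rk xs a < rk xs b) = (a < b)"
proof
  assume "a < b"
  hence b: "b \<in> set xs" using assms by auto
  have "{y \<in> set xs. y \<le> a} \<subset> {y \<in> set xs. y \<le> b}"
  proof -
    have "b \<in> {y \<in> set xs. y \<le> b}" "b \<notin> {y \<in> set xs. y \<le> a}" using b \<open>a < b\<close> by auto
    thus ?thesis by auto
  qed
  thus "rk xs a < rk xs b" unfolding rk_def by (simp add: psubset_card_mono)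
next
  assume h: "rk xs a < rk xs b"
  show "a < b"
  proof (rule ccontr)
    assume "\<not> a < b"
    hence "{y \<in> set xs. y \<le> b} \<subseteq> {y \<in> set xs. y \<le> a}" by auto
    hence "rk xs b \<le> rk xs a" unfolding rk_def by (simp add: card_mono)
    with h show False by simp
  qed
qed

lemma rk0: "0 \<notin> set xs \<Longrightarrow> rk xs 0 = 0"
  unfolding rk_def by auto

lemma std_perm:
  assumes "distinct xs" "0 \<notin> set xs"
  shows "is_perm (length xs) (std xs)"
proof -
  have inj: "inj_on (rk xs) (set xs)"
    using rk_less[OF assms(2)] by (intro inj_onI) (metis insertI2 not_less_iff_gr_or_eq)
  have sub: "rk xs ` set xs \<subseteq> {1..length xs}"
  proof
    fix z assume "z \<in> rk xs ` set xs"
    then obtain x where x: "x \<in> set xs" "z = rk xs x" by auto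
    have "x \<in> {y \<in> set xs. y \<le> x}" using x by auto
    hence "1 \<le> z" using x unfolding rk_def
      by (metis (no_types, lifting) One_nat_def Suc_leI card_gt_0_iff empty_iff finite_set finite_subset mem_Collect_eq subsetI)
    moreover have "z \<le> card (set xs)" unfolding x rk_def by (rule card_mono) auto
    ultimately show "z \<in> {1..length xs}" using distinct_card[OF assms(1)] by simp
  qed
  have "card (rk xs ` set xs) = length xs"
    using card_image[OF inj] distinct_card[OF assms(1)] by simp
  hence eq: "rk xs ` set xs = {1..length xs}"
    using sub by (intro card_subset_eq) auto
  have "std xs = map (rk xs) xs" unfolding std_def rk_def by simp
  thus ?thesis unfolding is_perm_def using eq inj assms(1) by (simp add: distinct_map)
qed

lemma main_shift:
  assumes n: "n \<ge> 2" and N: "N = 2*n+1 \<or> N = 2*n" and w: "is_perm N w"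
    and X: "crosses (arc N w 1) (arc N w 2)"
  shows "butler N w \<longleftrightarrow> butler (2*n-1) (std (take (2*n-1) w))"
proof -
  define xs where "xs = take (2*n-1) w"
  define w' where "w' = std xs"
  define g where "g = rk xs"
  define S where "S = insert 0 (set xs)"
  have lw: "length w = N" and dw: "distinct w" and sw: "set w = {1..N}"
    using w unfolding is_perm_def by auto
  have lxs: "length xs = 2*n-1" unfolding xs_def using lw N n by auto
  have dxs: "distinct xs" unfolding xs_def using dw by simp
  have z: "0 \<notin> set xs" unfolding xs_def using sw by (metis atLeastAtMost_iff in_set_takeD not_one_le_zero)
  have p': "is_perm (2*n-1) w'" unfolding w'_def using std_perm[OF dxs z] lxs by simp
  have gl: "\<And>a b. a \<in> S \<Longrightarrow> b \<in> S \<Longrightarrow> (g a < g b) = (a < b)"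
    unfolding g_def S_def using rk_less[OF z] by blast
  have ent: "ent w' i = g (ent w i) \<and> ent w i \<in> S" if "i \<le> 2*n-1" for i
  proof (cases "i = 0")
    case True thus ?thesis unfolding ent_def g_def S_def using rk0[OF z] by simp
  next
    case False
    hence i: "i - 1 < length xs" using that lxs by simp
    have "xs ! (i-1) = w ! (i-1)" unfolding xs_def using i lxs by simp
    moreover have "xs ! (i-1) \<in> set xs" using i by simp
    ultimately show ?thesis unfolding ent_def g_def S_def w'_def using False std_nth[OF i] by simp
  qed
  have arcs: "arc (2*n-1) w' r = map_prod g g (arc N w (Suc r)) \<and> fst (arc N w (Suc r)) \<in> S \<and> snd (arc N w (Suc r)) \<in> S"
    if r: "1 \<le> r" "r \<le> n" for r
  proof (cases "r = n")
    case True
    have "odd (2*n-1)" using n by simp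
    moreover have "(2*n-1+1) div 2 = n" using n by simp
    ultimately have "arc (2*n-1) w' r = (0, ent w' 1)" unfolding arc_def using True by simp
    moreover have "arc N w (Suc r) = (0, ent w 1)" unfolding arc_def using True N n r by auto
    ultimately show ?thesis using ent[of 1] ent[of 0] n by (auto simp: ent_def)
  next
    case False
    have "odd (2*n-1)" using n by simp
    moreover have "(2*n-1+1) div 2 = n" using n by simp
    ultimately have a1: "arc (2*n-1) w' r = (ent w' (2*n-2*r), ent w' (2*n-2*r+1))"
    proof -
      have e: "2*n-1-2*r+1 = 2*n-2*r" "2*n-1-2*r+2 = 2*n-2*r+1" using False r by auto
      show ?thesis unfolding arc_def using False r \<open>odd (2*n-1)\<close> \<open>(2*n-1+1) div 2 = n\<close>
        by (simp only: e if_False if_True)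
    qed
    have a2: "arc N w (Suc r) = (ent w (2*n-2*r), ent w (2*n-2*r+1))"
    proof -
      have e: "Suc (2*n - Suc (2*r)) = 2*n-2*r" "Suc (Suc (2*n - Suc (2*r))) = Suc(2*n-2*r)"
        "Suc(Suc(2*n - Suc(Suc(2*r)))) = 2*n-2*r" "Suc(Suc(Suc(2*n - Suc(Suc(2*r))))) = Suc(2*n-2*r)"
        "Suc (2 * n) - 2 * r = Suc (2 * n - 2 * r)"
        using False r by auto
      show ?thesis using N False r unfolding arc_def by (auto simp: e)
    qed
    show ?thesis unfolding a1 a2 using ent[of "2*n-2*r"] ent[of "2*n-2*r+1"] r False by auto
  qed
  have sh: "bcore (Suc n) (arc N w) (Suc (n-1)) = bcore n (arc (2*n-1) w') (n-1)"
  proof (rule bcore_shift)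
    fix r s assume rs: "1\<le>r" "r\<le>n" "1\<le>s" "s\<le>n"
    show "crosses (arc (2*n-1) w' r) (arc (2*n-1) w' s) = crosses (arc N w (Suc r)) (arc N w (Suc s))"
      using arcs[of r] arcs[of s] rs rels_mono(1)[OF gl, where \<alpha>="arc N w (Suc r)" and \<beta>="arc N w (Suc s)"] by simp
    show "nested_by (arc (2*n-1) w' r) (arc (2*n-1) w' s) = nested_by (arc N w (Suc r)) (arc N w (Suc s))"
      using arcs[of r] arcs[of s] rs rels_mono(2)[OF gl, where \<alpha>="arc N w (Suc r)" and \<beta>="arc N w (Suc s)"] by simp
  next
    fix r assume rs: "1\<le>r" "r\<le>n"
    show "forward (arc (2*n-1) w' r) = forward (arc N w (Suc r))"
      using arcs[of r] rs rels_mono(3)[OF gl, where \<alpha>="arc N w (Suc r)" and \<beta>="arc N w (Suc r)"] by simp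
  next
    show "crosses (arc N w 1) (arc N w 2)" by fact
    show "1 \<le> n - 1" "n - 1 \<le> n" using n by auto
  qed
  have na: "num_arcs N = Suc n" "num_arcs (2*n-1) = n" unfolding num_arcs_def using N n by auto
  have ix: "(if even N then N div 2 else (N - 1) div 2) = Suc (n-1)" using N n by auto
  have ix': "(if even (2*n-1) then (2*n-1) div 2 else (2*n-1 - 1) div 2) = n-1" using n by auto
  show ?thesis
    unfolding butler_bcore na ix ix' using sh p' w unfolding w'_def xs_def by simp
qed

theorem lemma4p5:
  fixes n :: nat
  assumes "n \<ge> 2"
  shows "(\<forall>w. is_perm (2*n+1) w \<longrightarrow> crosses (arc (2*n+1) w 1) (arc (2*n+1) w 2) \<longrightarrow>
            (butler (2*n+1) w \<longleftrightarrow> butler (2*n-1) (std (take (2*n-1) w))))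
       \<and> (\<forall>w. is_perm (2*n) w \<longrightarrow> crosses (arc (2*n) w 1) (arc (2*n) w 2) \<longrightarrow>
            (butler (2*n) w \<longleftrightarrow> butler (2*n-1) (std (take (2*n-1) w))))"
  using main_shift[OF assms] by blast

end
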